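(* For every $t\in(0,1)$, $$\lim_{n \to \infty} \sum_{k \ge 0} B^{n-k}_k(t) = \frac{1}{1+t}.$$
   Context: The Bernstein polynomials are $B^m_k(t) = \binom{m}{k} t^k (1-t)^{m-k}$ for integers $0\le k\le m$, and $B^m_k(t)=0$ for $m<k$ (so only terms with $0\le k\le n/2$ contribute). *)

theory Defs
  imports Complex_Main
begin

definition bernstein :: "nat \<Rightarrow> nat \<Rightarrow> real \<Rightarrow> real" where
  "bernstein m k t = (if k \<le> m then real (m choose k) * t ^ k * (1 - t) ^ (m - k) else 0)"

end

theory Submission
  imports Defs
begin

lemma bern_step:
  fixes t :: real
  shows "bernstein (Suc (Suc n) - Suc k) (Suc k) t
     = (1-t) * bernstein (Suc n - Suc k) (Suc k) t + t * bernstein (n - k) k t"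
proof -
  consider (a) "2*k+1 \<le> n" | (b) "2*k = n" | (c) "n < 2*k" by linarith
  then show ?thesis
  proof cases
    case a
    then obtain j where j: "n = 2*k+1+j" using le_Suc_ex by blast
    have "Suc (Suc n) - Suc k = Suc (k + Suc j)" "Suc n - Suc k = k + Suc j" "n - k = k + Suc j"
      using j by auto
    moreover have "Suc (k + Suc j) - Suc k = Suc j" "k + Suc j - Suc k = j" "k + Suc j - k = Suc j" by auto
    moreover have "real (Suc (k + Suc j) choose Suc k) = real (k + Suc j choose Suc k) + real (k + Suc j choose k)"
      by simp
    ultimately show ?thesis
      by (simp add: bernstein_def algebra_simps)
  next
    case b
    then have "Suc (Suc n) - Suc k = Suc k" "n - k = k" "Suc n - Suc k = k" by auto
    then show ?thesis by (simp add: bernstein_def algebra_simps)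
  next
    case c
    then show ?thesis by (simp add: bernstein_def)
  qed
qed

definition S :: "real \<Rightarrow> nat \<Rightarrow> real" where
  "S t n = (\<Sum>k\<le>n. bernstein (n - k) k t)"

lemma S_rec:
  fixes t :: real
  shows "S t (Suc (Suc n)) = (1-t) * S t (Suc n) + t * S t n"
proof -
  have h1: "S t (Suc (Suc n)) = bernstein (Suc (Suc n)) 0 t
      + (\<Sum>k\<le>Suc n. bernstein (Suc (Suc n) - Suc k) (Suc k) t)"
    unfolding S_def by (subst sum.atMost_Suc_shift) simp
  have h2: "S t (Suc n) = bernstein (Suc n) 0 t
      + (\<Sum>k\<le>n. bernstein (Suc n - Suc k) (Suc k) t)"
    unfolding S_def by (subst sum.atMost_Suc_shift) simp
  have h3: "bernstein (Suc n - Suc (Suc n)) (Suc (Suc n)) t = 0"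
    by (simp add: bernstein_def)
  have h4: "bernstein (n - Suc n) (Suc n) t = 0"
    by (simp add: bernstein_def)
  have h5: "bernstein (Suc (Suc n)) 0 t = (1-t) * bernstein (Suc n) 0 t"
    by (simp add: bernstein_def)
  have "(\<Sum>k\<le>Suc n. bernstein (Suc (Suc n) - Suc k) (Suc k) t)
      = (1-t) * (\<Sum>k\<le>Suc n. bernstein (Suc n - Suc k) (Suc k) t) + t * (\<Sum>k\<le>Suc n. bernstein (n - k) k t)"
    by (simp only: sum.cong[OF refl bern_step] sum.distrib sum_distrib_left)
  also have "\<dots> = (1-t) * (\<Sum>k\<le>n. bernstein (Suc n - Suc k) (Suc k) t) + t * S t n"
    unfolding sum.atMost_Suc h3 h4 S_def by simp
  finally show ?thesis using h1 h2 h5 by (simp add: algebra_simps)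
qed

lemma S_closed:
  fixes t :: real
  assumes "0 < t"
  shows "S t n = (1 - (-t)^(Suc n)) / (1+t) \<and> S t (Suc n) = (1 - (-t)^(Suc (Suc n))) / (1+t)"
proof (induction n)
  case 0
  have a: "S t 0 = 1" by (simp add: S_def bernstein_def)
  have b: "S t (Suc 0) = 1 - t" by (simp add: S_def bernstein_def)
  have p: "1 + t \<noteq> 0" using assms by simp
  have "(1 - (-t)^(Suc 0)) / (1+t) = 1" using p by simp
  moreover have "(1 - (-t)^(Suc (Suc 0))) / (1+t) = 1 - t"
    using p by (simp add: field_simps)
  ultimately show ?case using a b by simp
next
  case (Suc n)
  have p: "1 + t \<noteq> 0" using assms by simp
  have "S t (Suc (Suc n)) = (1-t) * ((1 - (-t)^(Suc (Suc n))) / (1+t)) + t * ((1 - (-t)^(Suc n)) / (1+t))"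
    using Suc S_rec by simp
  also have "\<dots> = (1 - (-t)^(Suc (Suc (Suc n)))) / (1+t)"
  proof -
    have "(1-t) * ((1 - (-t)^(Suc (Suc n))) / (1+t)) + t * ((1 - (-t)^(Suc n)) / (1+t))
       = ((1-t) * (1 - (-t)^(Suc (Suc n))) + t * (1 - (-t)^(Suc n))) / (1+t)"
      by (simp only: times_divide_eq_right add_divide_distrib)
    moreover have "(1-t) * (1 - (-t)^(Suc (Suc n))) + t * (1 - (-t)^(Suc n)) = 1 - (-t)^(Suc (Suc (Suc n)))"
      by (simp add: algebra_simps)
    ultimately show ?thesis by simp
  qed
  finally show ?case using Suc by simp
qed

theorem mainTheorem8:
  fixes t :: real
  assumes "0 < t" and "t < 1"
  shows "(\<lambda>n. \<Sum>k\<le>n. bernstein (n - k) k t) \<longlonglongrightarrow> 1 / (1 + t)"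
proof -
  have e: "(\<lambda>n. \<Sum>k\<le>n. bernstein (n - k) k t) = (\<lambda>n. (1 - (-t)^(Suc n)) / (1+t))"
    using S_closed[OF assms(1)] by (auto simp: S_def)
  have "(\<lambda>n. (-t)^n) \<longlonglongrightarrow> 0"
    by (rule LIMSEQ_power_zero) (use assms in simp)
  then have "(\<lambda>n. (-t)^(Suc n)) \<longlonglongrightarrow> 0" by (rule LIMSEQ_Suc)
  then have "(\<lambda>n. (1 - (-t)^(Suc n)) / (1+t)) \<longlonglongrightarrow> (1 - 0) / (1+t)"
    by (intro tendsto_intros) (use assms in auto)
  then show ?thesis using e by simp
qed

end
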